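(* Let $n$ and $k$ be integers with $2 \leq k \leq n-2$, and let $M$ be the positroid on ground set $[n]$ of rank $k$ with Grassmann necklace $(I_1, I_2, \dots, I_n)$. Then $M$ is a sparse paving matroid if and only if for every $i \in [n]$, $I_i \neq C_{k,n}^{(i)}$ implies that $I_{i-1} = C_{k,n}^{(i-1)}$, $I_{i+1} = C_{k,n}^{(i+1)}$, and $I_i = (C_{k,n}^{(i)} \setminus \{i + k - 1\}) \cup \{i+k\}$ (all indices and elements computed modulo $n$ with representatives in $[n]$). Moreover, in this case, the set of circuit-hyperplanes of $M$ consists precisely of the sets $C_{k,n}^{(i)}$ for those $i\in[n]$ with $I_i \neq C_{k,n}^{(i)}$.
   Context: For $t\in[n]$, the order $<_t$ on $[n]$ is $t <_t t+1 <_t \cdots <_t n <_t 1 <_t \cdots <_t t-1$. For $k$-subsets $I=\{a_1<_t\cdots<_t a_k\}$ and $J=\{b_1<_t\cdots<_t b_k\}$ of $[n]$, write $I\leq_t J$ if $a_i\leq_t b_i$ for all $i$. A Grassmann necklace is a sequence $(I_1,\dots,I_n)$ of $k$-subsets of $[n]$ such that (indices modulo $n$) if $i\in I_i$ then $I_{i+1}=(I_i\setminus\{i\})\cup\{j\}$ for some $j\in[n]$, and if $i\notin I_i$ then $I_{i+1}=I_i$. The positroid with Grassmann necklace $(I_1,\dots,I_n)$ is the matroid on $[n]$ whose set of bases is $\bigcap_{t=1}^n\{J\in\binom{[n]}{k}: I_t\leq_t J\}$; equivalently, for a positroid $M$ of rank $k$, $I_t$ is the $\leq_t$-minimal basis of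 $M$. For $i\in[n]$, $C_{k,n}^{(i)}=\{i,i+1,\dots,i+k-1\}$ computed modulo $n$ with representatives in $[n]$ (the cyclic interval of size $k$ starting at $i$). A matroid of rank $k$ is paving if every circuit has cardinality at least $k$, and sparse paving if both it and its dual are paving. A circuit-hyperplane is a set that is both a circuit and a hyperplane. *)

theory Defs
  imports Main
begin

definition cyc :: "nat \<Rightarrow> int \<Rightarrow> nat" where
  "cyc n x = nat ((x - 1) mod int n + 1)"

definition cint :: "nat \<Rightarrow> nat \<Rightarrow> int \<Rightarrow> nat set" where
  "cint n k i = {cyc n (i + int j) | j. j < k}"

text \<open>Position of a in the order t <_t t+1 <_t ... <_t t-1 (0 for t itself).\<close>
definition tpos :: "nat \<Rightarrow> nat \<Rightarrow> nat \<Rightarrow> int" where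
  "tpos n t a = (int a - int t) mod int n"

definition tle :: "nat \<Rightarrow> nat \<Rightarrow> nat \<Rightarrow> nat \<Rightarrow> bool" where
  "tle n t a b \<longleftrightarrow> tpos n t a \<le> tpos n t b"

definition tlist :: "nat \<Rightarrow> nat \<Rightarrow> nat set \<Rightarrow> nat list" where
  "tlist n t I = sort_key (tpos n t) (sorted_list_of_set I)"

definition gale_le :: "nat \<Rightarrow> nat \<Rightarrow> nat set \<Rightarrow> nat set \<Rightarrow> bool" where
  "gale_le n t I J \<longleftrightarrow> card I = card J \<and>
     (\<forall>i < card I. tle n t (tlist n t I ! i) (tlist n t J ! i))"

definition grassmann_necklace :: "nat \<Rightarrow> nat \<Rightarrow> (nat \<Rightarrow> nat set) \<Rightarrow> bool" where
  "grassmann_necklace n k I \<longleftrightarrow>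
     (\<forall>i\<in>{1..n}. I i \<subseteq> {1..n} \<and> card (I i) = k) \<and>
     (\<forall>i\<in>{1..n}.
        (i \<in> I i \<longrightarrow> (\<exists>j\<in>{1..n}. I (cyc n (int i + 1)) = (I i - {i}) \<union> {j})) \<and>
        (i \<notin> I i \<longrightarrow> I (cyc n (int i + 1)) = I i))"

definition positroid_bases :: "nat \<Rightarrow> nat \<Rightarrow> (nat \<Rightarrow> nat set) \<Rightarrow> nat set set" where
  "positroid_bases n k I =
     {J. J \<subseteq> {1..n} \<and> card J = k \<and> (\<forall>t\<in>{1..n}. gale_le n t (I t) J)}"

definition indep :: "'a set set \<Rightarrow> 'a set \<Rightarrow> bool" where
  "indep \<B> X \<longleftrightarrow> (\<exists>B\<in>\<B>. X \<subseteq> B)"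

definition mrank :: "'a set set \<Rightarrow> 'a set \<Rightarrow> nat" where
  "mrank \<B> X = Max (card ` {Y. Y \<subseteq> X \<and> indep \<B> Y})"

definition circuit :: "'a set \<Rightarrow> 'a set set \<Rightarrow> 'a set \<Rightarrow> bool" where
  "circuit E \<B> C \<longleftrightarrow> C \<subseteq> E \<and> \<not> indep \<B> C \<and> (\<forall>x\<in>C. indep \<B> (C - {x}))"

definition flat :: "'a set \<Rightarrow> 'a set set \<Rightarrow> 'a set \<Rightarrow> bool" where
  "flat E \<B> F \<longleftrightarrow> F \<subseteq> E \<and> (\<forall>x\<in>E - F. mrank \<B> (insert x F) > mrank \<B> F)"

definition hyperplane :: "'a set \<Rightarrow> 'a set set \<Rightarrow> 'a set \<Rightarrow> bool" where
  "hyperplane E \<B> H \<longleftrightarrow> flat E \<B> H \<and> mrank \<B> H + 1 = mrank \<B> E"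

definition circuit_hyperplanes :: "'a set \<Rightarrow> 'a set set \<Rightarrow> 'a set set" where
  "circuit_hyperplanes E \<B> = {X. circuit E \<B> X \<and> hyperplane E \<B> X}"

definition paving :: "'a set \<Rightarrow> 'a set set \<Rightarrow> bool" where
  "paving E \<B> \<longleftrightarrow> (\<forall>C. circuit E \<B> C \<longrightarrow> card C \<ge> mrank \<B> E)"

definition dual_bases :: "'a set \<Rightarrow> 'a set set \<Rightarrow> 'a set set" where
  "dual_bases E \<B> = (\<lambda>B. E - B) ` \<B>"

definition sparse_paving :: "'a set \<Rightarrow> 'a set set \<Rightarrow> bool" where
  "sparse_paving E \<B> \<longleftrightarrow> paving E \<B> \<and> paving E (dual_bases E \<B>)"

end

theory Submission
  imports Defs
begin


definition pos :: "nat \<Rightarrow> int \<Rightarrow> nat \<Rightarrow> int" where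
  "pos n t x = (int x - t) mod int n"

definition seg :: "nat \<Rightarrow> int \<Rightarrow> int \<Rightarrow> nat set" where
  "seg n t v = {x \<in> {1..n}. pos n t x < v}"

lemma int_cyc: "n > 0 \<Longrightarrow> int (cyc n y) = (y - 1) mod int n + 1"
  unfolding cyc_def by simp

lemma cyc_range: "n > 0 \<Longrightarrow> cyc n y \<in> {1..n}"
proof -
  assume n: "n > 0"
  have "0 \<le> (y - 1) mod int n" "(y - 1) mod int n < int n" using n by auto
  then show ?thesis using int_cyc[OF n, of y] by auto
qed

lemma pos_cyc: "n > 0 \<Longrightarrow> pos n t (cyc n y) = (y - t) mod int n"
proof -
  assume n: "n > 0"
  have "pos n t (cyc n y) = ((y - 1) mod int n + 1 - t) mod int n"
    unfolding pos_def using int_cyc[OF n] by simp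
  also have "\<dots> = ((y - 1) + 1 - t) mod int n" by (metis mod_add_left_eq mod_diff_left_eq)
  finally show ?thesis by simp
qed

lemma cyc_id: "x \<in> {1..n} \<Longrightarrow> cyc n (int x) = x"
proof -
  assume x: "x \<in> {1..n}"
  then have "(int x - 1) mod int n = int x - 1" by (intro mod_pos_pos_trivial) auto
  then show ?thesis unfolding cyc_def by simp
qed

lemma pos_range: "n > 0 \<Longrightarrow> 0 \<le> pos n t x \<and> pos n t x < int n"
  unfolding pos_def by auto

lemma pos_cyc_base: "n > 0 \<Longrightarrow> pos n (int (cyc n t)) x = pos n t x"
proof -
  assume n: "n > 0"
  have "pos n (int (cyc n t)) x = (int x - ((t - 1) mod int n + 1)) mod int n"
    unfolding pos_def using int_cyc[OF n] by simp
  also have "\<dots> = ((int x - 1) - (t - 1) mod int n) mod int n" by (simp add: algebra_simps)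
  also have "\<dots> = ((int x - 1) - (t - 1)) mod int n" by (rule mod_diff_right_eq)
  also have "\<dots> = (int x - ((t - 1) + 1)) mod int n" by (simp add: algebra_simps)
  finally show ?thesis unfolding pos_def by simp
qed

lemma seg_cyc_base: "n > 0 \<Longrightarrow> seg n (int (cyc n t)) v = seg n t v"
  unfolding seg_def using pos_cyc_base by simp

lemma cyc_cong: "a mod int n = b mod int n \<Longrightarrow> cyc n a = cyc n b"
proof -
  assume e: "a mod int n = b mod int n"
  have "(a - 1) mod int n = (b - 1) mod int n" by (metis e mod_diff_left_eq)
  then show ?thesis unfolding cyc_def by simp
qed

lemma cyc_mod: "n > 0 \<Longrightarrow> int (cyc n y) mod int n = y mod int n"
proof -
  assume n: "n > 0"
  have "int (cyc n y) mod int n = ((y - 1) mod int n + 1) mod int n" using int_cyc[OF n] by simp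
  also have "\<dots> = (y - 1 + 1) mod int n" by (simp add: mod_add_left_eq)
  finally show ?thesis by simp
qed

lemma cyc_cyc: "n > 0 \<Longrightarrow> cyc n (int (cyc n y) + a) = cyc n (y + a)"
proof -
  assume n: "n > 0"
  have "(int (cyc n y) + a) mod int n = (int (cyc n y) mod int n + a) mod int n" by (simp add: mod_add_left_eq)
  also have "\<dots> = (y mod int n + a) mod int n" using cyc_mod[OF n] by simp
  also have "\<dots> = (y + a) mod int n" by (simp add: mod_add_left_eq)
  finally show ?thesis by (rule cyc_cong)
qed

lemma pos_inj: "x \<in> {1..n} \<Longrightarrow> y \<in> {1..n} \<Longrightarrow> pos n t x = pos n t y \<Longrightarrow> x = y"
proof -
  assume x: "x \<in> {1..n}" and y: "y \<in> {1..n}" and e: "pos n t x = pos n t y"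
  have "(int x - t + t) mod int n = (int y - t + t) mod int n"
    using e unfolding pos_def by (metis mod_add_left_eq)
  then have "int x mod int n = int y mod int n" by simp
  then have "(int x - 1) mod int n = (int y - 1) mod int n" by (metis mod_diff_left_eq)
  moreover have "(int x - 1) mod int n = int x - 1" "(int y - 1) mod int n = int y - 1"
    using x y by (auto intro: mod_pos_pos_trivial)
  ultimately show ?thesis by simp
qed

lemma mem_seg_cyc: "n > 0 \<Longrightarrow> cyc n (t + j) \<in> seg n t v \<longleftrightarrow> j mod int n < v"
  unfolding seg_def using pos_cyc cyc_range by simp

lemma seg_image: "n > 0 \<Longrightarrow> 0 \<le> v \<Longrightarrow> v \<le> int n \<Longrightarrow>
   seg n t v = (\<lambda>j. cyc n (t + int j)) ` {0..<nat v}"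
proof -
  assume n: "n > 0" and v: "0 \<le> v" "v \<le> int n"
  show ?thesis
  proof (rule set_eqI, rule iffI)
    fix x assume xs: "x \<in> seg n t v"
    then have x: "x \<in> {1..n}" and p: "pos n t x < v" unfolding seg_def by auto
    define j where "j = nat (pos n t x)"
    have pj: "int j = pos n t x" using pos_range[OF n] j_def by simp
    have "pos n t (cyc n (t + int j)) = pos n t x"
      using pos_cyc[OF n] pj pos_range[OF n, of t x] by simp
    then have "cyc n (t + int j) = x" using pos_inj[OF cyc_range[OF n] x] by blast
    moreover have "j \<in> {0..<nat v}" using p pj by auto
    ultimately show "x \<in> (\<lambda>j. cyc n (t + int j)) ` {0..<nat v}" by force
  next
    fix x assume "x \<in> (\<lambda>j. cyc n (t + int j)) ` {0..<nat v}"
    then obtain j where j: "j < nat v" "x = cyc n (t + int j)" by auto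
    have "int j mod int n = int j" using j v by (intro mod_pos_pos_trivial) auto
    then show "x \<in> seg n t v" using j mem_seg_cyc[OF n] by auto
  qed
qed

lemma card_seg: "n > 0 \<Longrightarrow> 0 \<le> v \<Longrightarrow> v \<le> int n \<Longrightarrow> card (seg n t v) = nat v"
proof -
  assume n: "n > 0" and v: "0 \<le> v" "v \<le> int n"
  have "inj_on (\<lambda>j. cyc n (t + int j)) {0..<nat v}"
  proof (rule inj_onI)
    fix a b assume a: "a \<in> {0..<nat v}" and b: "b \<in> {0..<nat v}"
      and e: "cyc n (t + int a) = cyc n (t + int b)"
    have "pos n t (cyc n (t + int a)) = pos n t (cyc n (t + int b))" using e by simp
    then have "int a mod int n = int b mod int n" using pos_cyc[OF n] by simp
    moreover have "int a mod int n = int a" "int b mod int n = int b" using a b v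
      by (auto intro: mod_pos_pos_trivial)
    ultimately show "a = b" by simp
  qed
  then show ?thesis using seg_image[OF n v] by (simp add: card_image)
qed

lemma seg_sub: "seg n t v \<subseteq> {1..n}" unfolding seg_def by auto
lemma finite_seg: "finite (seg n t v)" by (rule finite_subset[OF seg_sub]) simp
lemma seg_mono: "v \<le> w \<Longrightarrow> seg n t v \<subseteq> seg n t w" unfolding seg_def by auto
lemma seg_inter: "seg n t v \<inter> seg n t w = seg n t (min v w)" unfolding seg_def by (auto simp: min_def)

lemma seg_Suc: "n > 0 \<Longrightarrow> 0 \<le> v \<Longrightarrow> v < int n \<Longrightarrow> seg n t (v + 1) = insert (cyc n (t + v)) (seg n t v)"
proof -
  assume n: "n > 0" and v: "0 \<le> v" "v < int n"
  have vm: "v mod int n = v" using v by (intro mod_pos_pos_trivial) auto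
  show ?thesis
  proof (rule set_eqI)
    fix x
    show "x \<in> seg n t (v + 1) \<longleftrightarrow> x \<in> insert (cyc n (t + v)) (seg n t v)"
    proof
      assume xs: "x \<in> seg n t (v + 1)"
      show "x \<in> insert (cyc n (t + v)) (seg n t v)"
      proof (cases "pos n t x = v")
        case True
        have "pos n t (cyc n (t + v)) = v" using pos_cyc[OF n] vm by simp
        have "x \<in> {1..n}" using xs unfolding seg_def by auto
        then have "x = cyc n (t + v)" using True pos_inj[of x n "cyc n (t + v)" t] cyc_range[OF n] \<open>pos n t (cyc n (t + v)) = v\<close> by auto
        then show ?thesis by simp
      next
        case False then show ?thesis using xs unfolding seg_def by auto
      qed
    next
      assume "x \<in> insert (cyc n (t + v)) (seg n t v)"
      then show "x \<in> seg n t (v + 1)"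
      proof
        assume "x = cyc n (t + v)"
        then show ?thesis using mem_seg_cyc[OF n, of t v "v+1"] vm by simp
      next
        assume "x \<in> seg n t v"
        moreover have "seg n t v \<subseteq> seg n t (v + 1)" by (rule seg_mono) simp
        ultimately show ?thesis by blast
      qed
    qed
  qed
qed

lemma cint_seg: "n > 0 \<Longrightarrow> k \<le> n \<Longrightarrow> cint n k i = seg n i (int k)"
  unfolding cint_def using seg_image[of n "int k" i] by auto

lemma seg_empty: "v \<le> 0 \<Longrightarrow> n > 0 \<Longrightarrow> seg n t v = {}"
proof -
  assume v: "v \<le> 0" and n: "n > 0"
  have "\<And>x. \<not> pos n t x < v" using pos_range[OF n] v by (metis le_less_trans not_le)
  then show ?thesis unfolding seg_def by simp
qed

lemma seg_all: "int n \<le> v \<Longrightarrow> n > 0 \<Longrightarrow> seg n t v = {1..n}"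
proof -
  assume v: "int n \<le> v" and n: "n > 0"
  have "\<And>x. pos n t x < v" using pos_range[OF n] v by (metis less_le_trans)
  then show ?thesis unfolding seg_def by auto
qed



lemma idx_lt:
  assumes srt: "sorted (map f L)" and d: "distinct L" and i: "i < length L"
  shows "f (L ! i) < v \<longleftrightarrow> i < card {x \<in> set L. f x < v}"
proof
  assume lt: "f (L ! i) < v"
  have "(\<lambda>j. L ! j) ` {0..i} \<subseteq> {x \<in> set L. f x < v}"
  proof
    fix x assume "x \<in> (\<lambda>j. L ! j) ` {0..i}"
    then obtain j where j: "j \<le> i" "x = L ! j" by auto
    have "f (L ! j) \<le> f (L ! i)" using sorted_nth_mono[OF srt, of j i] j i by simp
    then show "x \<in> {x \<in> set L. f x < v}" using j i lt by auto
  qed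
  moreover have "card ((\<lambda>j. L ! j) ` {0..i}) = Suc i"
  proof -
    have "inj_on (\<lambda>j. L ! j) {0..i}" using d i by (auto simp: inj_on_def nth_eq_iff_index_eq)
    then show ?thesis by (simp add: card_image)
  qed
  ultimately have "Suc i \<le> card {x \<in> set L. f x < v}"
    by (metis (no_types, lifting) card_mono finite_set finite_subset mem_Collect_eq subsetI)
  then show "i < card {x \<in> set L. f x < v}" by simp
next
  assume c: "i < card {x \<in> set L. f x < v}"
  show "f (L ! i) < v"
  proof (rule ccontr)
    assume "\<not> f (L ! i) < v"
    then have ge: "v \<le> f (L ! i)" by simp
    have "{x \<in> set L. f x < v} \<subseteq> (\<lambda>j. L ! j) ` {0..<i}"
    proof
      fix x assume x: "x \<in> {x \<in> set L. f x < v}"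
      then obtain j where j: "j < length L" "x = L ! j" by (auto simp: in_set_conv_nth)
      have "j < i"
      proof (rule ccontr)
        assume "\<not> j < i"
        then have "f (L ! i) \<le> f (L ! j)" using sorted_nth_mono[OF srt, of i j] j by simp
        then show False using x j ge by simp
      qed
      then show "x \<in> (\<lambda>j. L ! j) ` {0..<i}" using j by auto
    qed
    then have "card {x \<in> set L. f x < v} \<le> card ((\<lambda>j. L ! j) ` {0..<i})" by (rule card_mono[rotated]) simp
    also have "\<dots> \<le> i" using card_image_le[of "{0..<i}" "\<lambda>j. L ! j"] by simp
    finally show False using c by simp
  qed
qed

lemma tlist_props:
  assumes "finite X"
  shows "set (tlist n t X) = X" "distinct (tlist n t X)" "length (tlist n t X) = card X"
        "sorted (map (tpos n t) (tlist n t X))"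
  using assms unfolding tlist_def
  by (auto simp: sorted_sort_key distinct_card)

lemma gale_iff_cnt:
  assumes fX: "finite X" and fY: "finite Y"
  shows "gale_le n t X Y \<longleftrightarrow> card X = card Y \<and>
     (\<forall>v. card {y \<in> Y. tpos n t y < v} \<le> card {x \<in> X. tpos n t x < v})"
proof -
  let ?f = "tpos n t"
  let ?LX = "tlist n t X" and ?LY = "tlist n t Y"
  note PX = tlist_props[OF fX, of n t] and PY = tlist_props[OF fY, of n t]
  have kX: "\<And>i v. i < card X \<Longrightarrow> ?f (?LX ! i) < v \<longleftrightarrow> i < card {x \<in> X. ?f x < v}"
    using idx_lt[OF PX(4) PX(2)] PX(1) PX(3) by simp
  have kY: "\<And>i v. i < card Y \<Longrightarrow> ?f (?LY ! i) < v \<longleftrightarrow> i < card {x \<in> Y. ?f x < v}"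
    using idx_lt[OF PY(4) PY(2)] PY(1) PY(3) by simp
  show ?thesis
  proof
    assume g: "gale_le n t X Y"
    then have c: "card X = card Y" and le: "\<And>i. i < card X \<Longrightarrow> ?f (?LX ! i) \<le> ?f (?LY ! i)"
      unfolding gale_le_def tle_def by auto
    have "card {y \<in> Y. ?f y < v} \<le> card {x \<in> X. ?f x < v}" for v
    proof (cases "card {y \<in> Y. ?f y < v} = 0")
      case True then show ?thesis by simp
    next
      case False
      define i where "i = card {y \<in> Y. ?f y < v} - 1"
      have cy: "card {y \<in> Y. ?f y < v} \<le> card Y" by (rule card_mono[OF fY]) auto
      have i1: "i < card {y \<in> Y. ?f y < v}" using False i_def by simp
      have iY: "i < card Y" using i1 cy by simp
      have "?f (?LY ! i) < v" using kY[OF iY] i1 by simp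
      then have "?f (?LX ! i) < v" using le[of i] iY c by simp
      then have "i < card {x \<in> X. ?f x < v}" using kX[of i v] iY c by simp
      then show ?thesis using i_def False by simp
    qed
    then show "card X = card Y \<and> (\<forall>v. card {y \<in> Y. ?f y < v} \<le> card {x \<in> X. ?f x < v})" using c by simp
  next
    assume a: "card X = card Y \<and> (\<forall>v. card {y \<in> Y. ?f y < v} \<le> card {x \<in> X. ?f x < v})"
    have "?f (?LX ! i) \<le> ?f (?LY ! i)" if i: "i < card X" for i
    proof -
      let ?v = "?f (?LY ! i) + 1"
      have "i < card {y \<in> Y. ?f y < ?v}" using kY[of i ?v] i a by simp
      also have "\<dots> \<le> card {x \<in> X. ?f x < ?v}" using a by blast
      finally have h: "i < card {x \<in> X. ?f x < ?v}" .
      have "?f (?LX ! i) < ?v" using kX[OF i, of ?v] h by blast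
      then show ?thesis by simp
    qed
    then show "gale_le n t X Y" using a unfolding gale_le_def tle_def by auto
  qed
qed

lemma tpos_pos: "tpos n t x = pos n (int t) x" unfolding tpos_def pos_def by simp

lemma filter_seg: "X \<subseteq> {1..n} \<Longrightarrow> {x \<in> X. tpos n t x < v} = X \<inter> seg n (int t) v"
  unfolding seg_def tpos_pos by auto

lemma gale_iff_seg:
  assumes "X \<subseteq> {1..n}" "Y \<subseteq> {1..n}"
  shows "gale_le n t X Y \<longleftrightarrow> card X = card Y \<and>
     (\<forall>v. card (Y \<inter> seg n (int t) v) \<le> card (X \<inter> seg n (int t) v))"
proof -
  have "finite X" "finite Y" using assms finite_subset by auto
  then show ?thesis using gale_iff_cnt filter_seg[OF assms(1)] filter_seg[OF assms(2)] by simp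
qed



locale neck =
  fixes n k :: nat and I :: "nat \<Rightarrow> nat set"
  assumes npos: "0 < n" and kn: "k \<le> n" and G: "grassmann_necklace n k I"
begin

definition r :: "nat \<Rightarrow> nat \<Rightarrow> nat" where "r s m = cyc n (int s + int m)"

lemma I_sub: "t \<in> {1..n} \<Longrightarrow> I t \<subseteq> {1..n}" using G unfolding grassmann_necklace_def by auto
lemma I_card: "t \<in> {1..n} \<Longrightarrow> card (I t) = k" using G unfolding grassmann_necklace_def by auto
lemma I_fin: "t \<in> {1..n} \<Longrightarrow> finite (I t)" using I_sub finite_subset by (metis finite_atLeastAtMost)

lemma I_step: "t \<in> {1..n} \<Longrightarrow> I t - {t} \<subseteq> I (cyc n (int t + 1))"
  using G unfolding grassmann_necklace_def by (cases "t \<in> I t") auto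

lemma I_step_card:
  assumes t: "t \<in> {1..n}" and tP: "t \<in> P"
  shows "card (I (cyc n (int t + 1)) \<inter> P) \<le> card (I t \<inter> P)"
proof (cases "t \<in> I t")
  case True
  have "\<exists>j\<in>{1..n}. I (cyc n (int t + 1)) = (I t - {t}) \<union> {j}"
    using G t True unfolding grassmann_necklace_def by blast
  then obtain j where j: "I (cyc n (int t + 1)) = (I t - {t}) \<union> {j}" by blast
  have fin: "finite (I t \<inter> P)" using I_fin[OF t] by simp
  have "I (cyc n (int t + 1)) \<inter> P \<subseteq> insert j ((I t \<inter> P) - {t})" using j by auto
  then have "card (I (cyc n (int t + 1)) \<inter> P) \<le> card (insert j ((I t \<inter> P) - {t}))"
    by (rule card_mono[rotated]) (simp add: fin)
  also have "\<dots> \<le> Suc (card ((I t \<inter> P) - {t}))" by (simp add: card_insert_le_m1 fin)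
  also have "\<dots> = card (I t \<inter> P)" using True tP fin card.remove[of "I t \<inter> P" t] by simp
  finally show ?thesis .
next
  case False
  then have "I (cyc n (int t + 1)) = I t" using G t unfolding grassmann_necklace_def by blast
  then show ?thesis by simp
qed

lemma r_mem: "r s m \<in> {1..n}" unfolding r_def using cyc_range[OF npos] by blast
lemma r_0: "s \<in> {1..n} \<Longrightarrow> r s 0 = s" unfolding r_def using cyc_id by simp
lemma r_n: "s \<in> {1..n} \<Longrightarrow> r s n = s"
proof -
  assume s: "s \<in> {1..n}"
  have "r s n = cyc n (int s)" unfolding r_def by (rule cyc_cong) simp
  then show ?thesis using cyc_id[OF s] by simp
qed
lemma r_Suc: "cyc n (int (r s m) + 1) = r s (Suc m)"
  unfolding r_def using cyc_cyc[OF npos] by (simp add: ac_simps)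
lemma pos_r: "pos n (int s) (r s m) = int m mod int n"
  unfolding r_def using pos_cyc[OF npos] by simp

lemma necklace_cnt:
  assumes s: "s \<in> {1..n}" and t: "t \<in> {1..n}"
  shows "card (I t \<inter> seg n (int s) v) \<le> card (I s \<inter> seg n (int s) v)"
proof -
  let ?P = "seg n (int s) v"
  define d where "d = nat (pos n (int s) t)"
  have dn: "d < n" and dint: "int d = pos n (int s) t" using pos_range[OF npos, of "int s" t] d_def by auto
  have "pos n (int s) (r s d) = pos n (int s) t" using pos_r dn dint by simp
  then have td: "r s d = t" using pos_inj[OF r_mem t] by blast
  have inP: "r s m \<in> ?P \<longleftrightarrow> int m < v" if "m < n" for m
    using pos_r[of s m] that r_mem unfolding seg_def by auto
  show ?thesis
  proof (cases "int d \<le> v")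
    case True
    have "m \<le> d \<longrightarrow> card (I (r s m) \<inter> ?P) \<le> card (I s \<inter> ?P)" for m
    proof (induction m)
      case 0 then show ?case using r_0[OF s] by simp
    next
      case (Suc m)
      show ?case
      proof
        assume m: "Suc m \<le> d"
        have "r s m \<in> ?P" using inP[of m] m dn True by simp
        then have "card (I (r s (Suc m)) \<inter> ?P) \<le> card (I (r s m) \<inter> ?P)"
          using I_step_card[OF r_mem] r_Suc by metis
        then show "card (I (r s (Suc m)) \<inter> ?P) \<le> card (I s \<inter> ?P)" using Suc m by simp
      qed
    qed
    then show ?thesis using td by blast
  next
    case False
    have "d + j \<le> n \<longrightarrow> I t \<inter> ?P \<subseteq> I (r s (d + j)) \<inter> ?P" for j
    proof (induction j)
      case 0 then show ?case using td by simp
    next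
      case (Suc j)
      show ?case
      proof
        assume dj: "d + Suc j \<le> n"
        have "r s (d + j) \<notin> ?P" using inP[of "d + j"] dj False by simp
        then have "I (r s (d + j)) \<inter> ?P \<subseteq> I (r s (Suc (d + j))) \<inter> ?P"
          using I_step[OF r_mem, of s "d + j"] r_Suc by auto
        then show "I t \<inter> ?P \<subseteq> I (r s (d + Suc j)) \<inter> ?P" using Suc dj by auto
      qed
    qed
    from this[of "n - d"] have "I t \<inter> ?P \<subseteq> I s \<inter> ?P" using dn r_n[OF s] by simp
    then show ?thesis by (intro card_mono) (simp add: I_fin[OF s])
  qed
qed

lemma I_gale: "s \<in> {1..n} \<Longrightarrow> t \<in> {1..n} \<Longrightarrow> gale_le n s (I s) (I t)"
  using gale_iff_seg[OF I_sub I_sub] necklace_cnt I_card by simp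

lemma I_in_B: "s \<in> {1..n} \<Longrightarrow> I s \<in> positroid_bases n k I"
  unfolding positroid_bases_def using I_sub I_card I_gale by blast

lemma B_ne: "positroid_bases n k I \<noteq> {}"
  using I_in_B[of 1] npos by auto

lemma C_min:
  assumes J: "J \<subseteq> {1..n}" "card J = k"
  shows "gale_le n t (seg n (int t) (int k)) J"
proof -
  have cs: "card (seg n (int t) (int k)) = k" using card_seg[OF npos] kn by simp
  have "card (J \<inter> seg n (int t) v) \<le> card (seg n (int t) (int k) \<inter> seg n (int t) v)" for v
  proof (cases "v \<le> int k")
    case True
    then have "seg n (int t) (int k) \<inter> seg n (int t) v = seg n (int t) v" using seg_inter by (simp add: min_def)
    then show ?thesis by (metis Int_lower2 card_mono finite_seg)
  next
    case False
    then have "seg n (int t) (int k) \<inter> seg n (int t) v = seg n (int t) (int k)" using seg_inter by (simp add: min_def)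
    moreover have "card (J \<inter> seg n (int t) v) \<le> card J"
      using J finite_subset by (intro card_mono) auto
    ultimately show ?thesis using cs J by simp
  qed
  then show ?thesis using gale_iff_seg[OF seg_sub J(1)] cs J by simp
qed

lemma C_only:
  assumes X: "X \<subseteq> {1..n}" "card X = k" and g: "gale_le n t X (seg n (int t) (int k))"
  shows "X = seg n (int t) (int k)"
proof -
  let ?C = "seg n (int t) (int k)"
  have cs: "card ?C = k" using card_seg[OF npos] kn by simp
  have fX: "finite X" using X finite_subset by auto
  have "card (?C \<inter> ?C) \<le> card (X \<inter> ?C)" using g gale_iff_seg[OF X(1) seg_sub] by blast
  then have "card X \<le> card (X \<inter> ?C)" using cs X by simp
  then have "X \<inter> ?C = X" using card_subset_eq[OF fX, of "X \<inter> ?C"] card_mono[OF fX, of "X \<inter> ?C"] by auto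
  then have "X \<subseteq> ?C" by blast
  then show ?thesis using card_subset_eq[OF finite_seg] cs X by metis
qed

lemma C_notin_B:
  assumes t: "t \<in> {1..n}" and ne: "I t \<noteq> seg n (int t) (int k)"
  shows "seg n (int t) (int k) \<notin> positroid_bases n k I"
proof
  assume "seg n (int t) (int k) \<in> positroid_bases n k I"
  then have "gale_le n t (I t) (seg n (int t) (int k))" unfolding positroid_bases_def using t by blast
  then show False using C_only[OF I_sub[OF t] I_card[OF t]] ne by blast
qed

end


lemma two_elems: "finite A \<Longrightarrow> 2 \<le> card A \<Longrightarrow> \<exists>a b. a \<in> A \<and> b \<in> A \<and> a \<noteq> b"
proof -
  assume f: "finite A" and c: "2 \<le> card A"
  obtain T where T: "T \<subseteq> A" "card T = 2" using obtain_subset_with_card_n[OF c] by blast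
  then obtain a b where "T = {a, b}" "a \<noteq> b" by (auto simp: card_2_iff)
  then show ?thesis using T by auto
qed

lemma extend_to_card:
  assumes f: "finite E" and X: "X \<subseteq> E" and c: "card X \<le> m" "m \<le> card E"
  shows "\<exists>Y. X \<subseteq> Y \<and> Y \<subseteq> E \<and> card Y = m"
proof -
  have fX: "finite X" using f X finite_subset by blast
  have "m - card X \<le> card (E - X)" using c card_Diff_subset[OF fX X] by simp
  then obtain T where T: "T \<subseteq> E - X" "card T = m - card X" using obtain_subset_with_card_n by metis
  have fT: "finite T" using T f finite_subset by blast
  have "card (X \<union> T) = card X + card T" using T fX fT by (intro card_Un_disjoint) auto
  then show ?thesis using T X c by (intro exI[of _ "X \<union> T"]) auto
qed

locale mat =
  fixes E :: "'a set" and Bs :: "'a set set" and r :: nat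
  assumes finE: "finite E" and bsub: "\<And>b. b \<in> Bs \<Longrightarrow> b \<subseteq> E \<and> card b = r" and ne: "Bs \<noteq> {}"
begin

lemma indep_card: "indep Bs X \<Longrightarrow> X \<subseteq> E \<and> card X \<le> r"
proof -
  assume "indep Bs X"
  then obtain b where b: "b \<in> Bs" "X \<subseteq> b" unfolding indep_def by blast
  have fb: "finite b" using bsub[OF b(1)] finE finite_subset by blast
  show ?thesis using card_mono[OF fb b(2)] bsub[OF b(1)] b(2) by auto
qed

lemma mrank_props:
  assumes X: "X \<subseteq> E"
  shows "\<exists>Y\<subseteq>X. indep Bs Y \<and> card Y = mrank Bs X"
    and "\<And>Y. Y \<subseteq> X \<Longrightarrow> indep Bs Y \<Longrightarrow> card Y \<le> mrank Bs X"
proof -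
  let ?S = "card ` {Y. Y \<subseteq> X \<and> indep Bs Y}"
  have fX: "finite X" by (rule finite_subset[OF X finE])
  have "finite {Y. Y \<subseteq> X \<and> indep Bs Y}" by (rule finite_subset[of _ "Pow X"]) (auto simp: fX)
  then have fin: "finite ?S" by (rule finite_imageI)
  obtain b0 where b0: "b0 \<in> Bs" using ne by blast
  have "indep Bs {}" unfolding indep_def using b0 by blast
  then have e: "{} \<in> {Y. Y \<subseteq> X \<and> indep Bs Y}" by simp
  have c0: "card ({}::'a set) \<in> ?S" by (rule image_eqI[OF refl e])
  then have nem: "?S \<noteq> {}" by (intro notI) simp
  have "Max ?S \<in> ?S" by (rule Max_in[OF fin nem])
  then obtain Y where Y: "Y \<in> {Y. Y \<subseteq> X \<and> indep Bs Y}" "Max ?S = card Y" by (rule imageE)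
  from Y(1) have "Y \<subseteq> X" "indep Bs Y" by simp_all
  moreover have "card Y = mrank Bs X" unfolding mrank_def using Y(2) by simp
  ultimately show "\<exists>Y\<subseteq>X. indep Bs Y \<and> card Y = mrank Bs X" by blast
  show "\<And>Y. Y \<subseteq> X \<Longrightarrow> indep Bs Y \<Longrightarrow> card Y \<le> mrank Bs X"
  proof -
    fix Y assume "Y \<subseteq> X" "indep Bs Y"
    then have "Y \<in> {Y. Y \<subseteq> X \<and> indep Bs Y}" by simp
    then have "card Y \<in> ?S" by (rule imageI)
    then have "card Y \<le> Max ?S" by (rule Max_ge[OF fin])
    then show "card Y \<le> mrank Bs X" unfolding mrank_def .
  qed
qed

lemma mrank_E: "mrank Bs E = r"
proof -
  obtain b where b: "b \<in> Bs" using ne by blast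
  have "indep Bs b" using b unfolding indep_def by blast
  then have "r \<le> mrank Bs E" using mrank_props(2)[of E b] bsub[OF b] by simp
  moreover obtain Y where Y: "Y \<subseteq> E" "indep Bs Y" "card Y = mrank Bs E" using mrank_props(1)[of E] by blast
  moreover have "card Y \<le> r" using indep_card[OF Y(2)] by blast
  ultimately show ?thesis by simp
qed

lemma paving_small:
  assumes p: "paving E Bs"
  shows "X \<subseteq> E \<Longrightarrow> card X < r \<Longrightarrow> indep Bs X"
proof (induction "card X" arbitrary: X rule: less_induct)
  case less
  show ?case
  proof (rule ccontr)
    assume ni: "\<not> indep Bs X"
    have fX: "finite X" using less.prems finE finite_subset by blast
    have "\<forall>x\<in>X. indep Bs (X - {x})"
    proof
      fix x assume x: "x \<in> X"
      have "card (X - {x}) < card X" by (rule card_Diff1_less[OF fX x])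
      then show "indep Bs (X - {x})" using less.hyps[of "X - {x}"] less.prems by auto
    qed
    then have "circuit E Bs X" unfolding circuit_def using ni less.prems by blast
    then have "card X \<ge> r" using p mrank_E unfolding paving_def by auto
    then show False using less.prems by simp
  qed
qed

end

lemma dual_mat:
  assumes "mat E Bs r"
  shows "mat E (dual_bases E Bs) (card E - r)"
proof -
  interpret mat E Bs r by (rule assms)
  show ?thesis
  proof
    show "finite E" by (rule finE)
    show "dual_bases E Bs \<noteq> {}" using ne unfolding dual_bases_def by blast
    fix b assume "b \<in> dual_bases E Bs"
    then obtain c where c: "c \<in> Bs" "b = E - c" unfolding dual_bases_def by blast
    have "finite c" using bsub[OF c(1)] finE finite_subset by blast
    then show "b \<subseteq> E \<and> card b = card E - r" using c bsub[OF c(1)] card_Diff_subset by auto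
  qed
qed

lemma dual_big:
  assumes m: "mat E Bs r" and p: "paving E (dual_bases E Bs)"
    and Z: "Z \<subseteq> E" "r < card Z"
  shows "\<exists>b\<in>Bs. b \<subseteq> Z"
proof -
  interpret mat E Bs r by (rule m)
  interpret d: mat E "dual_bases E Bs" "card E - r" by (rule dual_mat[OF m])
  have fZ: "finite Z" using Z finE finite_subset by blast
  have cZ: "card Z \<le> card E" using Z finE card_mono by blast
  have "card (E - Z) < card E - r" using card_Diff_subset[OF fZ Z(1)] Z cZ by simp
  then have "indep (dual_bases E Bs) (E - Z)" using d.paving_small[OF p] by blast
  then obtain c where c: "c \<in> Bs" "E - Z \<subseteq> E - c" unfolding indep_def dual_bases_def by blast
  then have "c \<subseteq> Z" using bsub[OF c(1)] by blast
  then show ?thesis using c by blast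
qed

locale fam =
  fixes E :: "'a set" and k :: nat and F :: "'a set set"
  assumes finE: "finite E" and k2: "2 \<le> k" and kE: "k + 2 \<le> card E"
    and Fsub: "\<And>X. X \<in> F \<Longrightarrow> X \<subseteq> E \<and> card X = k"
    and Fpair: "\<And>X Y. X \<in> F \<Longrightarrow> Y \<in> F \<Longrightarrow> X \<noteq> Y \<Longrightarrow> card (X \<inter> Y) + 2 \<le> k"
begin

definition Bs where "Bs = {J. J \<subseteq> E \<and> card J = k \<and> J \<notin> F}"

lemma fin: "X \<subseteq> E \<Longrightarrow> finite X" by (rule finite_subset[OF _ finE])

lemma F1: assumes Y: "Y \<subseteq> E" "card Y = k - 1" shows "indep Bs Y"
proof -
  have fY: "finite Y" by (rule fin[OF Y(1)])
  have "card (E - Y) \<ge> 2" using card_Diff_subset[OF fY Y(1)] Y kE by simp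
  then obtain z1 z2 where z: "z1 \<in> E - Y" "z2 \<in> E - Y" "z1 \<noteq> z2"
    using two_elems[of "E - Y"] finE by blast
  have c1: "card (insert z1 Y) = k" "card (insert z2 Y) = k" using z fY Y k2 by auto
  have ne: "insert z1 Y \<noteq> insert z2 Y" using z by auto
  have "card Y \<le> card (insert z1 Y \<inter> insert z2 Y)" using fY by (intro card_mono) auto
  then have "insert z1 Y \<notin> F \<or> insert z2 Y \<notin> F"
  proof -
    assume "card Y \<le> card (insert z1 Y \<inter> insert z2 Y)"
    then have "\<not> card (insert z1 Y \<inter> insert z2 Y) + 2 \<le> k" using Y k2 by linarith
    then show ?thesis using Fpair[OF _ _ ne] by blast
  qed
  then show ?thesis using c1 z Y unfolding indep_def Bs_def by blast
qed

lemma F1': assumes X: "X \<subseteq> E" "card X < k" shows "indep Bs X"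
proof -
  have a: "card X \<le> k - 1" "k - 1 \<le> card E" using X kE by auto
  obtain Y where Y: "X \<subseteq> Y" "Y \<subseteq> E" "card Y = k - 1"
    using extend_to_card[OF finE X(1) a] by blast
  then show ?thesis using F1[OF Y(2,3)] unfolding indep_def by blast
qed

lemma F2: assumes Z: "Z \<subseteq> E" "card Z = k + 1" shows "\<exists>b\<in>Bs. b \<subseteq> Z"
proof -
  have fZ: "finite Z" by (rule fin[OF Z(1)])
  obtain z1 z2 where z: "z1 \<in> Z" "z2 \<in> Z" "z1 \<noteq> z2" using two_elems[OF fZ] Z k2 by auto
  have c1: "card (Z - {z1}) = k" "card (Z - {z2}) = k" using z fZ Z by auto
  have ne: "Z - {z1} \<noteq> Z - {z2}" using z by auto
  have "(Z - {z1}) \<inter> (Z - {z2}) = Z - {z1, z2}" by auto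
  moreover have "card (Z - {z1, z2}) = k - 1" using z fZ Z by (simp add: card_Diff_subset)
  ultimately have "\<not> card ((Z - {z1}) \<inter> (Z - {z2})) + 2 \<le> k" using k2 by simp
  then have "Z - {z1} \<notin> F \<or> Z - {z2} \<notin> F" using Fpair[OF _ _ ne] by blast
  then show ?thesis using c1 Z unfolding Bs_def by blast
qed

lemma F2': assumes Z: "Z \<subseteq> E" "k + 1 \<le> card Z" shows "\<exists>b\<in>Bs. b \<subseteq> Z"
proof -
  obtain T where T: "T \<subseteq> Z" "card T = k + 1" using obtain_subset_with_card_n[OF Z(2)] by blast
  then show ?thesis using F2[of T] Z by blast
qed

lemma M: "mat E Bs k"
proof
  show "finite E" by (rule finE)
  show "\<And>b. b \<in> Bs \<Longrightarrow> b \<subseteq> E \<and> card b = k" unfolding Bs_def by blast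
  show "Bs \<noteq> {}" using F2'[of E] kE by auto
qed

interpretation m: mat E Bs k by (rule M)
interpretation d: mat E "dual_bases E Bs" "card E - k" by (rule dual_mat[OF M])

lemma sp: "sparse_paving E Bs"
  unfolding sparse_paving_def
proof
  show "paving E Bs" unfolding paving_def m.mrank_E
  proof (intro allI impI)
    fix C assume "circuit E Bs C"
    then have C: "C \<subseteq> E" "\<not> indep Bs C" unfolding circuit_def by auto
    show "k \<le> card C"
    proof (rule ccontr)
      assume "\<not> k \<le> card C"
      then have "indep Bs C" using F1'[OF C(1)] by simp
      then show False using C(2) by blast
    qed
  qed
  show "paving E (dual_bases E Bs)" unfolding paving_def d.mrank_E
  proof (intro allI impI)
    fix C assume "circuit E (dual_bases E Bs) C"
    then have C: "C \<subseteq> E" "\<not> indep (dual_bases E Bs) C" unfolding circuit_def by auto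
    show "card E - k \<le> card C"
    proof (rule ccontr)
      assume "\<not> card E - k \<le> card C"
      then have "k + 1 \<le> card (E - C)" using card_Diff_subset[OF fin[OF C(1)] C(1)] by simp
      then obtain b where b: "b \<in> Bs" "b \<subseteq> E - C" using F2'[of "E - C"] by blast
      then have "C \<subseteq> E - b" using C by blast
      then have "indep (dual_bases E Bs) C" using b unfolding indep_def dual_bases_def by blast
      then show False using C by blast
    qed
  qed
qed

lemma ch: "circuit_hyperplanes E Bs = F"
proof (rule set_eqI, rule iffI)
  fix X assume "X \<in> circuit_hyperplanes E Bs"
  then have c: "circuit E Bs X" and h: "hyperplane E Bs X" unfolding circuit_hyperplanes_def by auto
  have X: "X \<subseteq> E" "\<not> indep Bs X" using c unfolding circuit_def by auto
  have rk: "mrank Bs X + 1 = k" using h m.mrank_E unfolding hyperplane_def by simp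
  have "k \<le> card X"
  proof (rule ccontr)
    assume "\<not> k \<le> card X"
    then have "indep Bs X" using F1'[OF X(1)] by simp
    then show False using X(2) by blast
  qed
  moreover have "\<not> k + 1 \<le> card X"
  proof
    assume "k + 1 \<le> card X"
    then obtain b where b: "b \<in> Bs" "b \<subseteq> X" using F2' X by blast
    then have "indep Bs b" unfolding indep_def by blast
    then have "card b \<le> mrank Bs X" using m.mrank_props(2)[OF X(1) b(2)] by blast
    then show False using b rk unfolding Bs_def by simp
  qed
  ultimately have "card X = k" by simp
  then show "X \<in> F" using X unfolding indep_def Bs_def by blast
next
  fix X assume XF: "X \<in> F"
  have X: "X \<subseteq> E" "card X = k" using Fsub[OF XF] by auto
  have fX: "finite X" by (rule fin[OF X(1)])
  have ni: "\<not> indep Bs X"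
  proof
    assume "indep Bs X"
    then obtain b where b: "b \<in> Bs" "X \<subseteq> b" unfolding indep_def by blast
    have "b \<subseteq> E" "card b = k" using b(1) unfolding Bs_def by auto
    then have "X = b" using card_subset_eq[OF fin b(2)] X by simp
    then show False using b XF unfolding Bs_def by blast
  qed
  have circ: "circuit E Bs X" unfolding circuit_def
  proof (intro conjI ballI)
    show "X \<subseteq> E" by (rule X(1))
    show "\<not> indep Bs X" by (rule ni)
    fix x assume x: "x \<in> X"
    have "card (X - {x}) = k - 1" using x fX X by simp
    then show "indep Bs (X - {x})" using F1[of "X - {x}"] X by blast
  qed
  have rX: "mrank Bs X = k - 1"
  proof -
    obtain x where x: "x \<in> X" using X k2 by fastforce
    have "card (X - {x}) = k - 1" using x fX X by simp
    then have "indep Bs (X - {x})" using F1[of "X - {x}"] X by blast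
    then have ge: "k - 1 \<le> mrank Bs X" using m.mrank_props(2)[OF X(1), of "X - {x}"] x fX X by auto
    obtain Y where Y: "Y \<subseteq> X" "indep Bs Y" "card Y = mrank Bs X" using m.mrank_props(1)[OF X(1)] by blast
    have "Y \<noteq> X" using Y ni by blast
    then have "card Y < card X" using Y psubset_card_mono[OF fX, of Y] by blast
    then show ?thesis using ge Y X by simp
  qed
  have hyp: "hyperplane E Bs X" unfolding hyperplane_def flat_def
  proof (intro conjI ballI)
    show "X \<subseteq> E" by (rule X(1))
    show "mrank Bs X + 1 = mrank Bs E" using rX m.mrank_E k2 by simp
    fix x assume x: "x \<in> E - X"
    have "card (insert x X) = k + 1" using x fX X by simp
    then obtain b where b: "b \<in> Bs" "b \<subseteq> insert x X" using F2[of "insert x X"] x X by auto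
    have "indep Bs b" using b unfolding indep_def by blast
    then have "k \<le> mrank Bs (insert x X)" using m.mrank_props(2)[of "insert x X" b] b x X unfolding Bs_def by auto
    then show "mrank Bs X < mrank Bs (insert x X)" using rX k2 by simp
  qed
  show "X \<in> circuit_hyperplanes E Bs" using circ hyp unfolding circuit_hyperplanes_def by blast
qed

end


lemma mod_shift:
  assumes n: "n > 0" and m: "0 \<le> m" and md: "m < d" and dn: "d < int n"
  shows "(m - d) mod int n = m - d + int n"
proof -
  have "(m - d) mod int n = (m - d + int n) mod int n" by simp
  also have "\<dots> = m - d + int n" using m md dn by (intro mod_pos_pos_trivial) auto
  finally show ?thesis .
qed

lemma cint_pair:
  assumes n: "n > 0" and k2: "2 \<le> k" and kn: "k + 2 \<le> n"
    and d2: "2 \<le> pos n i j" and dn: "pos n i j \<le> int n - 2"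
  shows "card (seg n i (int k) \<inter> seg n (int j) (int k)) + 2 \<le> k"
proof -
  define d where "d = pos n i j"
  define m0 where "m0 = max 0 (int k + d - int n)"
  let ?a = "cyc n (i + m0)" and ?b = "cyc n (i + (m0 + 1))"
  have m0: "0 \<le> m0" "m0 + 1 < int k" "m0 + 1 < d" "int k + d - int n \<le> m0"
    using d2 dn kn k2 unfolding m0_def d_def by auto
  have dlt: "d < int n" using dn n unfolding d_def by simp
  have jd: "(int j - i) mod int n = d" unfolding d_def pos_def by simp
  have posj: "pos n (int j) (cyc n (i + m)) = m - d + int n" if "0 \<le> m" "m < d" for m
  proof -
    have "pos n (int j) (cyc n (i + m)) = (i + m - int j) mod int n" using pos_cyc[OF n] by simp
    also have "\<dots> = (m - (int j - i)) mod int n" by (simp add: algebra_simps)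
    also have "\<dots> = (m - (int j - i) mod int n) mod int n" by (simp add: mod_diff_right_eq)
    also have "\<dots> = m - d + int n" using jd mod_shift[OF n that dlt] by simp
    finally show ?thesis .
  qed
  have posi: "pos n i (cyc n (i + m)) = m" if "0 \<le> m" "m < int n" for m
    using pos_cyc[OF n] that by simp
  have a1: "?a \<in> seg n i (int k)" "?b \<in> seg n i (int k)"
    using posi[of m0] posi[of "m0+1"] m0 kn cyc_range[OF n] unfolding seg_def by auto
  have a2: "?a \<notin> seg n (int j) (int k)" "?b \<notin> seg n (int j) (int k)"
    using posj[of m0] posj[of "m0+1"] m0 unfolding seg_def by auto
  have ab: "?a \<noteq> ?b" using posi[of m0] posi[of "m0+1"] m0 kn by auto
  have "seg n i (int k) \<inter> seg n (int j) (int k) \<subseteq> seg n i (int k) - {?a, ?b}" using a2 by blast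
  then have "card (seg n i (int k) \<inter> seg n (int j) (int k)) \<le> card (seg n i (int k) - {?a, ?b})"
    by (rule card_mono[rotated]) (simp add: finite_seg)
  also have "\<dots> = k - 2" using a1 ab card_seg[OF n, of "int k" i] kn
    by (simp add: card_Diff_subset finite_seg)
  finally show ?thesis using k2 by simp
qed

lemma cint_cyc: "n > 0 \<Longrightarrow> k \<le> n \<Longrightarrow> cint n k (int (cyc n y)) = cint n k y"
  using cint_seg seg_cyc_base by simp

lemma seg_km1:
  assumes n: "n > 0" and k: "1 \<le> k" "k \<le> n"
  shows "seg n t (int k) = insert (cyc n (t + int k - 1)) (seg n t (int k - 1))"
    and "cyc n (t + int k - 1) \<notin> seg n t (int k - 1)"
proof -
  have "seg n t (int k - 1 + 1) = insert (cyc n (t + (int k - 1))) (seg n t (int k - 1))"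
    using seg_Suc[OF n, of "int k - 1" t] k by simp
  then show "seg n t (int k) = insert (cyc n (t + int k - 1)) (seg n t (int k - 1))" by (simp add: algebra_simps)
  have "(int k - 1) mod int n = int k - 1" using k by (intro mod_pos_pos_trivial) auto
  then show "cyc n (t + int k - 1) \<notin> seg n t (int k - 1)"
    using mem_seg_cyc[OF n, of t "int k - 1" "int k - 1"] by (simp add: algebra_simps)
qed

lemma seg_kp1:
  assumes n: "n > 0" and k: "k < n"
  shows "seg n t (int k + 1) = insert (cyc n (t + int k)) (seg n t (int k))"
    and "cyc n (t + int k) \<notin> seg n t (int k)"
proof -
  show "seg n t (int k + 1) = insert (cyc n (t + int k)) (seg n t (int k))"
    using seg_Suc[OF n, of "int k" t] k by simp
  have "int k mod int n = int k" using k by (intro mod_pos_pos_trivial) auto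
  then show "cyc n (t + int k) \<notin> seg n t (int k)"
    using mem_seg_cyc[OF n, of t "int k" "int k"] by simp
qed

locale pneck = neck +
  assumes k2: "2 \<le> k" and kn2: "k + 2 \<le> n"
begin

abbreviation "E \<equiv> {1..n}"
abbreviation "B \<equiv> positroid_bases n k I"
definition "Cs t = seg n t (int k)"
definition "Ds t = seg n t (int k - 1) \<union> {cyc n (t + int k)}"

lemma Cs_cint: "cint n k t = Cs t" unfolding Cs_def using cint_seg npos kn by simp

lemma Ds_eq: "(cint n k t - {cyc n (t + int k - 1)}) \<union> {cyc n (t + int k)} = Ds t"
proof -
  have k1: "1 \<le> k" using k2 by simp
  show ?thesis unfolding Cs_cint Cs_def Ds_def using seg_km1[OF npos k1 kn, of t] by auto
qed

lemma Cs_card: "card (Cs t) = k" unfolding Cs_def using card_seg[OF npos] kn by simp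

lemma D_gale:
  assumes t: "t \<in> E" and J: "J \<subseteq> E" "card J = k" and ne: "J \<noteq> Cs (int t)"
  shows "gale_le n t (Ds (int t)) J"
proof -
  let ?s = "seg n (int t)"
  let ?b = "cyc n (int t + int k)"
  have k1: "1 \<le> k" using k2 by simp
  have kn': "k < n" using kn2 by simp
  note km = seg_km1[OF npos k1 kn, of "int t"] and kp = seg_kp1[OF npos kn', of "int t"]
  have fJ: "finite J" by (rule finite_subset[OF J(1)]) simp
  have Dsub: "Ds (int t) \<subseteq> E" unfolding Ds_def using seg_sub cyc_range[OF npos] by blast
  have cD: "card (Ds (int t)) = k"
  proof -
    have "?b \<notin> ?s (int k - 1)" using kp(2) seg_mono[of "int k - 1" "int k" n "int t"] by auto
    then have "card (Ds (int t)) = Suc (card (?s (int k - 1)))" unfolding Ds_def by (simp add: finite_seg)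
    then show ?thesis using card_seg[OF npos, of "int k - 1" "int t"] k1 kn by simp
  qed
  have "card (J \<inter> ?s v) \<le> card (Ds (int t) \<inter> ?s v)" for v
  proof -
    consider "v \<le> int k - 1" | "v = int k" | "int k + 1 \<le> v" by linarith
    then show ?thesis
    proof cases
      case 1
      then have "?s v \<subseteq> Ds (int t)" using seg_mono[OF 1, of n "int t"] unfolding Ds_def by blast
      then have "Ds (int t) \<inter> ?s v = ?s v" by blast
      then show ?thesis by (metis Int_lower2 card_mono finite_seg)
    next
      case 2
      have "Ds (int t) \<inter> ?s (int k) = ?s (int k - 1)" unfolding Ds_def using km kp(2) by auto
      then have c1: "card (Ds (int t) \<inter> ?s v) = k - 1" using 2 card_seg[OF npos, of "int k - 1" "int t"] k1 kn by simp
      have "card (J \<inter> ?s (int k)) \<noteq> k"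
      proof
        assume ck: "card (J \<inter> ?s (int k)) = k"
        have "J \<inter> ?s (int k) = J" using card_subset_eq[OF fJ _ ] ck J by (metis Int_lower1)
        then have "J \<subseteq> Cs (int t)" unfolding Cs_def by blast
        then have "J = Cs (int t)" using card_subset_eq[OF finite_seg] Cs_card J unfolding Cs_def by metis
        then show False using ne by blast
      qed
      moreover have "card (J \<inter> ?s (int k)) \<le> k" using card_mono[OF fJ, of "J \<inter> ?s (int k)"] J by auto
      ultimately show ?thesis using c1 2 by simp
    next
      case 3
      have "Ds (int t) \<subseteq> ?s (int k + 1)" unfolding Ds_def using kp(1) km(1) by auto
      then have "Ds (int t) \<subseteq> ?s v" using seg_mono[OF 3, of n "int t"] by blast
      then have "Ds (int t) \<inter> ?s v = Ds (int t)" by blast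
      moreover have "card (J \<inter> ?s v) \<le> k" using card_mono[OF fJ, of "J \<inter> ?s v"] J by auto
      ultimately show ?thesis using cD by simp
    qed
  qed
  then show ?thesis using gale_iff_seg[OF Dsub J(1)] cD J by simp
qed

end


context pneck
begin

lemma B_mat: "mat E B k"
proof
  show "finite E" by simp
  show "\<And>b. b \<in> B \<Longrightarrow> b \<subseteq> E \<and> card b = k" unfolding positroid_bases_def by blast
  show "B \<noteq> {}" by (rule B_ne)
qed

lemma pos_self: "pos n t (cyc n t) = 0" using pos_cyc[OF npos] by simp

lemma Dform:
  assumes sp: "sparse_paving E B" and i: "i \<in> E" and ne: "I i \<noteq> Cs (int i)"
  shows "I i = Ds (int i)"
proof -
  interpret m: mat E B k by (rule B_mat)
  have p1: "paving E B" and p2: "paving E (dual_bases E B)" using sp unfolding sparse_paving_def by auto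
  have k1: "1 \<le> k" using k2 by simp
  have kn': "k < n" using kn2 by simp
  let ?s = "seg n (int i)"
  let ?P = "?s (int k - 1)"
  let ?a = "cyc n (int i + int k - 1)" and ?b = "cyc n (int i + int k)"
  note km = seg_km1[OF npos k1 kn, of "int i"] and kp = seg_kp1[OF npos kn', of "int i"]
  have fI: "finite (I i)" by (rule I_fin[OF i])
  have cP: "card ?P = k - 1" using card_seg[OF npos, of "int k - 1" "int i"] k1 kn by simp
  have "indep B ?P" using m.paving_small[OF p1 seg_sub] cP k1 by simp
  then obtain J where J: "J \<in> B" "?P \<subseteq> J" unfolding indep_def by blast
  have JE: "J \<subseteq> E" "card J = k" using J(1) unfolding positroid_bases_def by auto
  have "gale_le n i (I i) J" using J(1) i unfolding positroid_bases_def by blast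
  then have "card (J \<inter> ?P) \<le> card (I i \<inter> ?P)" using gale_iff_seg[OF I_sub[OF i] JE(1)] by blast
  moreover have "J \<inter> ?P = ?P" using J(2) by blast
  ultimately have "card ?P \<le> card (I i \<inter> ?P)" by simp
  moreover have "card (I i \<inter> ?P) \<le> card ?P" by (rule card_mono[OF finite_seg]) blast
  ultimately have "I i \<inter> ?P = ?P" using card_subset_eq[OF finite_seg, of "I i \<inter> ?P"] by simp
  then have PI: "?P \<subseteq> I i" by blast
  have cZ: "card (?s (int k + 1)) = k + 1" using card_seg[OF npos, of "int k + 1" "int i"] kn' by simp
  have "k < card (?s (int k + 1))" using cZ by simp
  then obtain J2 where J2: "J2 \<in> B" "J2 \<subseteq> ?s (int k + 1)" using dual_big[OF B_mat p2 seg_sub] by blast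
  have J2E: "J2 \<subseteq> E" "card J2 = k" using J2(1) unfolding positroid_bases_def by auto
  have "gale_le n i (I i) J2" using J2(1) i unfolding positroid_bases_def by blast
  then have "card (J2 \<inter> ?s (int k + 1)) \<le> card (I i \<inter> ?s (int k + 1))"
    using gale_iff_seg[OF I_sub[OF i] J2E(1)] by blast
  moreover have "J2 \<inter> ?s (int k + 1) = J2" using J2(2) by blast
  ultimately have "card (I i) \<le> card (I i \<inter> ?s (int k + 1))" using J2E I_card[OF i] by simp
  moreover have "card (I i \<inter> ?s (int k + 1)) \<le> card (I i)" by (rule card_mono[OF fI]) blast
  ultimately have "I i \<inter> ?s (int k + 1) = I i" using card_subset_eq[OF fI, of "I i \<inter> ?s (int k + 1)"] by simp
  then have IZ: "I i \<subseteq> insert ?b (insert ?a ?P)" using kp(1) km(1) by blast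
  have aI: "?a \<notin> I i"
  proof
    assume aI: "?a \<in> I i"
    have "Cs (int i) \<subseteq> I i" unfolding Cs_def km(1) using PI aI by simp
    then have "Cs (int i) = I i" using card_subset_eq[OF fI] Cs_card I_card[OF i] by metis
    then show False using ne by simp
  qed
  then have sub: "I i \<subseteq> insert ?b ?P" using IZ by blast
  have "card (insert ?b ?P) \<le> k" using cP k1 by (simp add: card_insert_if finite_seg)
  then have "I i = insert ?b ?P"
    using card_seteq[OF _ sub] I_card[OF i] by (simp add: finite_seg)
  then show ?thesis unfolding Ds_def by simp
qed

lemma nbr:
  assumes sp: "sparse_paving E B" and i: "i \<in> E" and ne: "I i \<noteq> Cs (int i)"
  shows "I (cyc n (int i + 1)) = Cs (int i + 1)"
proof (rule ccontr)
  let ?i' = "cyc n (int i + 1)"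
  let ?b = "cyc n (int i + int k)"
  assume ne': "I ?i' \<noteq> Cs (int i + 1)"
  have i': "?i' \<in> E" using cyc_range[OF npos] by blast
  have "Cs (int ?i') = Cs (int i + 1)" unfolding Cs_def using seg_cyc_base[OF npos] by simp
  then have Ii': "I ?i' = Ds (int ?i')" using Dform[OF sp i'] ne' by simp
  also have "\<dots> = seg n (int i + 1) (int k - 1) \<union> {cyc n (int i + 1 + int k)}"
    unfolding Ds_def using seg_cyc_base[OF npos] cyc_cyc[OF npos] by simp
  finally have Ii'2: "I ?i' = seg n (int i + 1) (int k - 1) \<union> {cyc n (int i + 1 + int k)}" .
  have kn': "k < n" using kn2 by simp
  have kmod: "int k mod int n = int k" using kn' by (intro mod_pos_pos_trivial) auto
  have k1mod: "(int k - 1) mod int n = int k - 1" using kn' k2 by (intro mod_pos_pos_trivial) auto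
  have bI: "?b \<in> I i" using Dform[OF sp i ne] unfolding Ds_def by simp
  have "pos n (int i) ?b = int k" using pos_cyc[OF npos] kmod by simp
  moreover have "pos n (int i) i = 0" unfolding pos_def by simp
  ultimately have "?b \<noteq> i" using k2 by auto
  then have "?b \<in> I ?i'" using I_step[OF i] bI by blast
  moreover have pb: "pos n (int i + 1) ?b = int k - 1" using pos_cyc[OF npos] k1mod by (simp add: algebra_simps)
  have "?b \<notin> seg n (int i + 1) (int k - 1)" using pb unfolding seg_def by simp
  moreover have "pos n (int i + 1) (cyc n (int i + 1 + int k)) = int k" using pos_cyc[OF npos] kmod by simp
  then have "?b \<noteq> cyc n (int i + 1 + int k)" using pb by auto
  ultimately show False using Ii'2 by blast
qed

lemma sp_cond:
  assumes sp: "sparse_paving E B"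
  shows "\<forall>i\<in>E. I i \<noteq> cint n k (int i) \<longrightarrow>
              I (cyc n (int i - 1)) = cint n k (int i - 1) \<and>
              I (cyc n (int i + 1)) = cint n k (int i + 1) \<and>
              I i = (cint n k (int i) - {cyc n (int i + int k - 1)}) \<union> {cyc n (int i + int k)}"
proof (intro ballI impI conjI)
  fix i assume i: "i \<in> E" and ne: "I i \<noteq> cint n k (int i)"
  then have ne': "I i \<noteq> Cs (int i)" using Cs_cint by simp
  show "I (cyc n (int i + 1)) = cint n k (int i + 1)" using nbr[OF sp i ne'] Cs_cint by simp
  show "I i = (cint n k (int i) - {cyc n (int i + int k - 1)}) \<union> {cyc n (int i + int k)}"
    using Dform[OF sp i ne'] Ds_eq by simp
  show "I (cyc n (int i - 1)) = cint n k (int i - 1)"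
  proof (rule ccontr)
    let ?h = "cyc n (int i - 1)"
    assume a: "I ?h \<noteq> cint n k (int i - 1)"
    have h: "?h \<in> E" using cyc_range[OF npos] by blast
    have "cint n k (int ?h) = cint n k (int i - 1)" by (rule cint_cyc[OF npos kn])
    then have "I ?h \<noteq> Cs (int ?h)" using a Cs_cint by simp
    then have "I (cyc n (int ?h + 1)) = Cs (int ?h + 1)" by (rule nbr[OF sp h])
    moreover have "cyc n (int ?h + 1) = i" using cyc_cyc[OF npos, of "int i - 1" 1] cyc_id[OF i] by simp
    moreover have "Cs (int ?h + 1) = Cs (int i)"
    proof -
      have "Cs (int ?h + 1) = Cs (int (cyc n (int ?h + 1)))" unfolding Cs_def using seg_cyc_base[OF npos] by simp
      then show ?thesis using \<open>cyc n (int ?h + 1) = i\<close> by simp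
    qed
    ultimately show False using ne' by simp
  qed
qed

end


context pneck
begin

definition "condI \<longleftrightarrow> (\<forall>i\<in>E. I i \<noteq> cint n k (int i) \<longrightarrow>
              I (cyc n (int i - 1)) = cint n k (int i - 1) \<and>
              I (cyc n (int i + 1)) = cint n k (int i + 1) \<and>
              I i = (cint n k (int i) - {cyc n (int i + int k - 1)}) \<union> {cyc n (int i + int k)})"

definition "FF = {cint n k (int i) | i. i \<in> E \<and> I i \<noteq> cint n k (int i)}"

lemma cond_fam:
  assumes c: condI
  shows "fam E k FF"
proof
  show "finite E" by simp
  show "2 \<le> k" by (rule k2)
  show "k + 2 \<le> card E" using kn2 by simp
  fix X assume "X \<in> FF"
  then obtain i where "X = cint n k (int i)" unfolding FF_def by blast
  then show "X \<subseteq> E \<and> card X = k" using Cs_cint Cs_card seg_sub unfolding Cs_def by simp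
next
  fix X Y assume X: "X \<in> FF" and Y: "Y \<in> FF" and XY: "X \<noteq> Y"
  obtain i where i: "X = cint n k (int i)" "i \<in> E" "I i \<noteq> cint n k (int i)" using X unfolding FF_def by blast
  obtain j where j: "Y = cint n k (int j)" "j \<in> E" "I j \<noteq> cint n k (int j)" using Y unfolding FF_def by blast
  have ci: "I (cyc n (int i - 1)) = cint n k (int i - 1)" "I (cyc n (int i + 1)) = cint n k (int i + 1)"
    using c i unfolding condI_def by auto
  define d where "d = pos n (int i) j"
  have dr: "0 \<le> d" "d < int n" using pos_range[OF npos] d_def by auto
  have "d \<noteq> 0"
  proof
    assume "d = 0"
    then have "pos n (int i) j = pos n (int i) i" unfolding d_def pos_def by simp
    then have "j = i" using pos_inj[OF j(2) i(2)] by blast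
    then show False using XY i j by simp
  qed
  moreover have "d \<noteq> 1"
  proof
    assume "d = 1"
    have "pos n (int i) (cyc n (int i + 1)) = 1 mod int n" using pos_cyc[OF npos] by simp
    also have "\<dots> = 1" using kn2 by simp
    finally have "pos n (int i) j = pos n (int i) (cyc n (int i + 1))" using \<open>d = 1\<close> d_def by simp
    then have "j = cyc n (int i + 1)" using pos_inj[of j n "cyc n (int i + 1)" "int i"] j(2) cyc_range[OF npos] by blast
    then have "I j = cint n k (int j)" using ci(2) cint_cyc[OF npos kn] by simp
    then show False using j by simp
  qed
  moreover have "d \<noteq> int n - 1"
  proof
    assume d1: "d = int n - 1"
    have "pos n (int i) (cyc n (int i - 1)) = (- 1) mod int n" using pos_cyc[OF npos] by simp
    also have "\<dots> = int n - 1" using kn2 by (simp add: zmod_minus1)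
    finally have "pos n (int i) j = pos n (int i) (cyc n (int i - 1))" using d1 d_def by simp
    then have "j = cyc n (int i - 1)" using pos_inj[of j n "cyc n (int i - 1)" "int i"] j(2) cyc_range[OF npos] by blast
    then have "I j = cint n k (int j)" using ci(1) cint_cyc[OF npos kn] by simp
    then show False using j by simp
  qed
  ultimately have "2 \<le> d" "d \<le> int n - 2" using dr by auto
  then have "card (seg n (int i) (int k) \<inter> seg n (int j) (int k)) + 2 \<le> k"
    using cint_pair[OF npos k2 kn2] d_def by blast
  then show "card (X \<inter> Y) + 2 \<le> k" using i j Cs_cint unfolding Cs_def by simp
qed

lemma cond_B:
  assumes c: condI
  shows "B = fam.Bs E k FF"
proof -
  interpret f: fam E k FF by (rule cond_fam[OF c])
  show ?thesis
  proof (rule set_eqI, rule iffI)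
    fix J assume J: "J \<in> B"
    have JE: "J \<subseteq> E" "card J = k" using J unfolding positroid_bases_def by auto
    have "J \<notin> FF"
    proof
      assume "J \<in> FF"
      then obtain i where i: "J = cint n k (int i)" "i \<in> E" "I i \<noteq> cint n k (int i)" unfolding FF_def by blast
      have "gale_le n i (I i) J" using J i(2) unfolding positroid_bases_def by blast
      then have "gale_le n i (I i) (seg n (int i) (int k))" using i(1) Cs_cint unfolding Cs_def by simp
      then have "I i = seg n (int i) (int k)" by (rule C_only[OF I_sub[OF i(2)] I_card[OF i(2)]])
      then show False using i(3) Cs_cint unfolding Cs_def by simp
    qed
    then show "J \<in> f.Bs" using JE unfolding f.Bs_def by blast
  next
    fix J assume J: "J \<in> f.Bs"
    then have JE: "J \<subseteq> E" "card J = k" "J \<notin> FF" unfolding f.Bs_def by auto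
    have "gale_le n t (I t) J" if t: "t \<in> E" for t
    proof (cases "I t = cint n k (int t)")
      case True
      then show ?thesis using C_min[OF JE(1,2)] Cs_cint unfolding Cs_def by simp
    next
      case False
      then have "I t = Ds (int t)" using c t Ds_eq unfolding condI_def by simp
      moreover have "J \<noteq> Cs (int t)" using JE(3) False t Cs_cint unfolding FF_def by auto
      ultimately show ?thesis using D_gale[OF t JE(1,2)] by simp
    qed
    then show "J \<in> B" using JE unfolding positroid_bases_def by blast
  qed
qed

lemma main:
  "(sparse_paving E B \<longleftrightarrow> condI) \<and> (sparse_paving E B \<longrightarrow> circuit_hyperplanes E B = FF)"
proof -
  have 1: "sparse_paving E B \<Longrightarrow> condI" using sp_cond unfolding condI_def by blast
  have 2: "condI \<Longrightarrow> sparse_paving E B \<and> circuit_hyperplanes E B = FF"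
  proof -
    assume c: condI
    interpret f: fam E k FF by (rule cond_fam[OF c])
    show ?thesis using f.sp f.ch cond_B[OF c] by simp
  qed
  show ?thesis using 1 2 by blast
qed

end

theorem theorem3p2:
  fixes n k :: nat and I :: "nat \<Rightarrow> nat set"
  assumes "2 \<le> k" and "k + 2 \<le> n"
    and "grassmann_necklace n k I"
  shows "(sparse_paving {1..n} (positroid_bases n k I) \<longleftrightarrow>
           (\<forall>i\<in>{1..n}. I i \<noteq> cint n k (int i) \<longrightarrow>
              I (cyc n (int i - 1)) = cint n k (int i - 1) \<and>
              I (cyc n (int i + 1)) = cint n k (int i + 1) \<and>
              I i = (cint n k (int i) - {cyc n (int i + int k - 1)}) \<union> {cyc n (int i + int k)}))
       \<and> (sparse_paving {1..n} (positroid_bases n k I) \<longrightarrow>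
           circuit_hyperplanes {1..n} (positroid_bases n k I) =
             {cint n k (int i) | i. i \<in> {1..n} \<and> I i \<noteq> cint n k (int i)})"
proof -
  interpret pneck n k I
    by unfold_locales (use assms in auto)
  show ?thesis using main unfolding condI_def FF_def .
qed


end
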